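(* For every program $C$ and runtimes $f,g\in\mathbb{T}$ with $\mathrm{mod}(C)\cap\mathrm{Vars}(g)=\emptyset$, $$\mathsf{ert}[\![C]\!](f\oplus g)\;\preceq\;\mathsf{ert}[\![C]\!](f)\oplus g .$$
   Context: States and programs. Fix a finite set $\mathrm{Vars}$ of variables; values are $\mathbb{N}$, locations are $\mathbb{N}_{>0}$. A stack is $s\colon \mathrm{Vars}\to\mathbb{N}$; a heap is a partial map $h$ from a finite set $\mathrm{dom}(h)\subseteq\mathbb{N}_{>0}$ to $\mathbb{N}$. $h_1\perp h_2$ means disjoint domains; then $h_1\star h_2$ is their union; $h_\emptyset$ is the empty heap. $\mathsf{States}$ is the set of pairs $(s,h)$. $s(e)$ is the value of a (heap-independent) arithmetic expression $e$ under $s$, $s\models\varphi$ means the Boolean expression $\varphi$ holds under $s$, $s[x\mapsto v]$ is the updated stack. Programs are generated by $C ::= \mathtt{tick}(e) \mid x:=e \mid x:=\mathtt{alloc}(e) \mid \langle e\rangle:=e' \mid x:=\langle e\rangle \mid \mathtt{free}(e) \mid \{C\}[p]\{C\} \mid \mathtt{if}(\varphi)\{C\}\mathtt{else}\{C\} \mid C;C \mid \mathtt{while}(\varphi)\{C\}$, where $p$ is an expression with $s(p)\in[0,1]\cap\mathbb{Q}$ for all $s$. $\mathrm{mod}(C)$ is the set of variables potentially modified by $C$, i.e. the variables $x$ occurring as the target of $x:=e$, $x:=\mathtt{alloc}(e)$ or $x:=\langle e\rangle$ in $C$. For a runtime $g$, $x\notin\mathrm{Vars}(g)$ means $g(s[x\mapsto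 v],h)=g(s,h)$ for all $(s,h)$ and $v$. Runtimes. $\mathbb{T}$ is the set of functions $\mathsf{States}\to[0,\infty]$, ordered pointwise by $\preceq$; arithmetic is pointwise with $0\cdot\infty=0$. $[\varphi]$ is the $0/1$-valued Iverson bracket. Truncated subtraction: $a\dot- b=\max(a-b,0)$, $\infty\dot- b=\infty$ for finite $b$, $a\dot-\infty=0$. $(f\oplus g)(s,h)=\min\{f(s,h_1)+g(s,h_2)\mid h=h_1\star h_2\}$; $(f \mathbin{-\!\!\ominus} g)(s,h)=\sup\{g(s,h\star h')\dot- f(s,h')\mid h'\perp h\}$; $(\inf y\colon f)(s,h)=\inf_{v\in\mathbb{N}} f(s[y\mapsto v],h)$, $(\sup y\colon f)(s,h)=\sup_{v\in\mathbb{N}}f(s[y\mapsto v],h)$; $f[x/e](s,h)=f(s[x\mapsto s(e)],h)$. $\mathsf{tm}(e)(s,h)=s(e)$ if $h=h_\emptyset$, else $\infty$; $[e\mapsto e'](s,h)=0$ if $\mathrm{dom}(h)=\{s(e)\}$ and $h(s(e))=s(e')$, else $\infty$; $[e\mapsto -](s,h)=0$ if $\mathrm{dom}(h)=\{s(e)\}$, else $\infty$; $\bigoplus_{i=1}^{e} f_i$ is the separating sum over $i=1,\dots,s(e)$ (empty one: $[\mathsf{emp}]$, which is $0$ if $h=h_\emptyset$, else $\infty$). Expected runtime transformer $\mathsf{ert}[\![C]\!]\colon\mathbb{T}\to\mathbb{T}$ (with $v$ fresh): $\mathsf{ert}[\![\mathtt{tick}(e)]\!](f)=\mathsf{tm}(e)\oplus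 f$; $\mathsf{ert}[\![x:=e]\!](f)=f[x/e]$; $\mathsf{ert}[\![x:=\mathtt{alloc}(e)]\!](f)=\sup v\colon (\bigoplus_{i=1}^{e}[v+i-1\mapsto 0])\mathbin{-\!\!\ominus} f[x/v]$; $\mathsf{ert}[\![\langle e\rangle:=e']\!](f)=[e\mapsto-]\oplus([e\mapsto e']\mathbin{-\!\!\ominus} f)$; $\mathsf{ert}[\![x:=\langle e\rangle]\!](f)=\inf v\colon [e\mapsto v]\oplus([e\mapsto v]\mathbin{-\!\!\ominus} f[x/v])$; $\mathsf{ert}[\![\mathtt{free}(e)]\!](f)=[e\mapsto-]\oplus f$; $\mathsf{ert}[\![C_1;C_2]\!](f)=\mathsf{ert}[\![C_1]\!](\mathsf{ert}[\![C_2]\!](f))$; conditional: $[\varphi]\cdot\mathsf{ert}[\![C_1]\!](f)+[\neg\varphi]\cdot\mathsf{ert}[\![C_2]\!](f)$; probabilistic choice: $p\cdot\mathsf{ert}[\![C_1]\!](f)+(1-p)\cdot\mathsf{ert}[\![C_2]\!](f)$; $\mathsf{ert}[\![\mathtt{while}(\varphi)\{C\}]\!](f)=\mathrm{lfp}\, g.\ [\neg\varphi]\cdot f+[\varphi]\cdot\mathsf{ert}[\![C]\!](g)$ (least fixed point in $(\mathbb{T},\preceq)$). *)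

theory Defs
  imports "HOL-Library.Extended_Nonnegative_Real"
begin

type_synonym 'v stack = "'v \<Rightarrow> nat"

typedef heap = "{h :: nat \<Rightarrow> nat option. finite (dom h) \<and> 0 \<notin> dom h}"
  morphisms hmap Heap
  by (rule exI[of _ Map.empty]) auto

definition hemp :: heap where "hemp = Heap Map.empty"

definition hdisj :: "heap \<Rightarrow> heap \<Rightarrow> bool" where
  "hdisj h1 h2 \<longleftrightarrow> dom (hmap h1) \<inter> dom (hmap h2) = {}"

definition hunion :: "heap \<Rightarrow> heap \<Rightarrow> heap" where
  "hunion h1 h2 = Heap (hmap h1 ++ hmap h2)"

type_synonym 'v state = "'v stack \<times> heap"
type_synonym 'v runtime = "'v state \<Rightarrow> ennreal"

type_synonym 'v aexp = "'v stack \<Rightarrow> nat"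
type_synonym 'v bexp = "'v stack \<Rightarrow> bool"
type_synonym 'v pexp = "'v stack \<Rightarrow> rat"

datatype 'v prog =
    Tick "'v aexp"
  | Assign 'v "'v aexp"
  | Alloc 'v "'v aexp"
  | Store "'v aexp" "'v aexp"
  | Load 'v "'v aexp"
  | Free "'v aexp"
  | PChoice "'v prog" "'v pexp" "'v prog"
  | If "'v bexp" "'v prog" "'v prog"
  | Seq "'v prog" "'v prog"
  | While "'v bexp" "'v prog"

primrec wf_prog :: "'v prog \<Rightarrow> bool" where
  "wf_prog (Tick e) = True"
| "wf_prog (Assign x e) = True"
| "wf_prog (Alloc x e) = True"
| "wf_prog (Store e e') = True"
| "wf_prog (Load x e) = True"
| "wf_prog (Free e) = True"
| "wf_prog (PChoice C1 p C2) = ((\<forall>s. 0 \<le> p s \<and> p s \<le> 1) \<and> wf_prog C1 \<and> wf_prog C2)"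
| "wf_prog (If b C1 C2) = (wf_prog C1 \<and> wf_prog C2)"
| "wf_prog (Seq C1 C2) = (wf_prog C1 \<and> wf_prog C2)"
| "wf_prog (While b C) = wf_prog C"

primrec modv :: "'v prog \<Rightarrow> 'v set" where
  "modv (Tick e) = {}"
| "modv (Assign x e) = {x}"
| "modv (Alloc x e) = {x}"
| "modv (Store e e') = {}"
| "modv (Load x e) = {x}"
| "modv (Free e) = {}"
| "modv (PChoice C1 p C2) = modv C1 \<union> modv C2"
| "modv (If b C1 C2) = modv C1 \<union> modv C2"
| "modv (Seq C1 C2) = modv C1 \<union> modv C2"
| "modv (While b C) = modv C"

definition not_in_vars :: "'v \<Rightarrow> 'v runtime \<Rightarrow> bool" where
  "not_in_vars x g \<longleftrightarrow> (\<forall>s h v. g (s(x := v), h) = g (s, h))"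

text \<open>Truncated subtraction with \<open>a -. \<infinity> = 0\<close>.\<close>
definition tsub :: "ennreal \<Rightarrow> ennreal \<Rightarrow> ennreal" where
  "tsub a b = (if b = top then 0 else if a = top then top else a - b)"

definition sepcon :: "'v runtime \<Rightarrow> 'v runtime \<Rightarrow> 'v runtime" (infixl "\<oplus>\<^sub>s" 65) where
  "sepcon f g = (\<lambda>(s, h). Inf {f (s, h1) + g (s, h2) | h1 h2. hdisj h1 h2 \<and> h = hunion h1 h2})"

definition sepimp :: "'v runtime \<Rightarrow> 'v runtime \<Rightarrow> 'v runtime" where
  "sepimp f g = (\<lambda>(s, h). Sup {tsub (g (s, hunion h h')) (f (s, h')) | h'. hdisj h' h})"

definition emp :: "'v runtime" where
  "emp = (\<lambda>(s, h). if h = hemp then 0 else top)"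

definition tm :: "'v aexp \<Rightarrow> 'v runtime" where
  "tm e = (\<lambda>(s, h). if h = hemp then ennreal (real (e s)) else top)"

definition pto :: "'v aexp \<Rightarrow> 'v aexp \<Rightarrow> 'v runtime" where
  "pto e e' = (\<lambda>(s, h). if dom (hmap h) = {e s} \<and> hmap h (e s) = Some (e' s) then 0 else top)"

definition pto_any :: "'v aexp \<Rightarrow> 'v runtime" where
  "pto_any e = (\<lambda>(s, h). if dom (hmap h) = {e s} then 0 else top)"

text \<open>Iterated separating sum over i = 1..n.\<close>
primrec bigsep_n :: "(nat \<Rightarrow> 'v runtime) \<Rightarrow> nat \<Rightarrow> 'v runtime" where
  "bigsep_n F 0 = emp"
| "bigsep_n F (Suc n) = bigsep_n F n \<oplus>\<^sub>s F (Suc n)"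

definition bigsep :: "(nat \<Rightarrow> 'v runtime) \<Rightarrow> 'v aexp \<Rightarrow> 'v runtime" where
  "bigsep F e = (\<lambda>(s, h). bigsep_n F (e s) (s, h))"

definition subst :: "'v runtime \<Rightarrow> 'v \<Rightarrow> 'v aexp \<Rightarrow> 'v runtime" where
  "subst f x e = (\<lambda>(s, h). f (s(x := e s), h))"

definition iv :: "'v bexp \<Rightarrow> 'v runtime \<Rightarrow> 'v runtime" where
  "iv b f = (\<lambda>(s, h). (if b s then 1 else 0) * f (s, h))"

primrec ert :: "'v prog \<Rightarrow> 'v runtime \<Rightarrow> 'v runtime" where
  "ert (Tick e) f = tm e \<oplus>\<^sub>s f"
| "ert (Assign x e) f = subst f x e"
| "ert (Alloc x e) f = (\<lambda>\<sigma>. SUP v::nat.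
      sepimp (bigsep (\<lambda>i. pto (\<lambda>_. v + i - 1) (\<lambda>_. 0)) e) (subst f x (\<lambda>_. v)) \<sigma>)"
| "ert (Store e e') f = pto_any e \<oplus>\<^sub>s sepimp (pto e e') f"
| "ert (Load x e) f = (\<lambda>\<sigma>. INF v::nat.
      (pto e (\<lambda>_. v) \<oplus>\<^sub>s sepimp (pto e (\<lambda>_. v)) (subst f x (\<lambda>_. v))) \<sigma>)"
| "ert (Free e) f = pto_any e \<oplus>\<^sub>s f"
| "ert (PChoice C1 p C2) f = (\<lambda>(s, h).
      ennreal (real_of_rat (p s)) * ert C1 f (s, h)
      + ennreal (1 - real_of_rat (p s)) * ert C2 f (s, h))"
| "ert (If b C1 C2) f = (\<lambda>\<sigma>. iv b (ert C1 f) \<sigma> + iv (\<lambda>s. \<not> b s) (ert C2 f) \<sigma>)"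
| "ert (Seq C1 C2) f = ert C1 (ert C2 f)"
| "ert (While b C) f = lfp (\<lambda>X \<sigma>. iv (\<lambda>s. \<not> b s) f \<sigma> + iv b (ert C X) \<sigma>)"

end

theory Submission
  imports Defs
begin

lemma Inf_add_ge:
  fixes L c :: ennreal
  assumes "\<And>x. x \<in> S \<Longrightarrow> L \<le> x + c"
  shows "L \<le> Inf S + c"
proof (cases "S = {}")
  case True then show ?thesis by simp
next
  case False
  have "Inf S + c = Inf ((\<lambda>x. x + c) ` S)"
    using continuous_at_Inf_mono[of "\<lambda>x. x + c" S] False
    using continuous_add[of "at_right (Inf S)", of "\<lambda>x. x" "\<lambda>x. c"]
    by (auto simp: mono_def add_right_mono)
  then show ?thesis using assms by (auto intro!: Inf_greatest)
qed

lemma tsub_mono: "a \<le> a' \<Longrightarrow> tsub a b \<le> tsub a' b"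
  by (auto simp: tsub_def ennreal_minus_mono top_unique)

lemma tsub_add: "tsub (a + c) b \<le> tsub a b + c"
  unfolding tsub_def
  using add_diff_le_ennreal[of c a b] by (auto simp: top_unique add.commute)

lemma hmap_hunion: "hmap (hunion h1 h2) = hmap h1 ++ hmap h2"
proof -
  have "finite (dom (hmap h1))" "0 \<notin> dom (hmap h1)" "finite (dom (hmap h2))" "0 \<notin> dom (hmap h2)"
    using hmap[of h1] hmap[of h2] by auto
  then show ?thesis unfolding hunion_def by (subst Heap_inverse) auto
qed

lemma heap_eq: "h = h' \<longleftrightarrow> hmap h = hmap h'"
  by (simp add: hmap_inject)

lemma hdisj_sym: "hdisj a b \<Longrightarrow> hdisj b a"
  by (auto simp: hdisj_def)

lemma split_ext:
  assumes "hdisj h' (hunion h1 h2)" "hdisj h1 h2"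
  shows "hdisj h' h1" "hdisj (hunion h1 h') h2"
    "hunion (hunion h1 h2) h' = hunion (hunion h1 h') h2"
proof -
  show "hdisj h' h1" "hdisj (hunion h1 h') h2" using assms by (auto simp: hdisj_def hmap_hunion)
  have "hmap h2 ++ hmap h' = hmap h' ++ hmap h2"
    using assms by (intro map_add_comm) (auto simp: hdisj_def hmap_hunion)
  then show "hunion (hunion h1 h2) h' = hunion (hunion h1 h') h2"
    by (simp add: heap_eq hmap_hunion map_add_assoc[symmetric] del: map_add_assoc)
qed

lemma split_assoc:
  assumes "hdisj h12 h3" "h12 = hunion h1 h2" "hdisj h1 h2"
  shows "hdisj h2 h3" "hdisj h1 (hunion h2 h3)"
    "hunion h12 h3 = hunion h1 (hunion h2 h3)"
  using assms by (auto simp: hdisj_def hmap_hunion heap_eq)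

lemma sepcon_apply: "(f \<oplus>\<^sub>s g) (s, h) = Inf {f (s, h1) + g (s, h2) | h1 h2. hdisj h1 h2 \<and> h = hunion h1 h2}"
  by (simp add: sepcon_def)

lemma sepcon_le: "hdisj h1 h2 \<Longrightarrow> (f \<oplus>\<^sub>s g) (s, hunion h1 h2) \<le> f (s, h1) + g (s, h2)"
  unfolding sepcon_apply by (rule Inf_lower) blast

lemma sepcon_ge:
  "(\<And>h1 h2. hdisj h1 h2 \<Longrightarrow> h = hunion h1 h2 \<Longrightarrow> L \<le> f (s, h1) + g (s, h2)) \<Longrightarrow> L \<le> (f \<oplus>\<^sub>s g) (s, h)"
  unfolding sepcon_apply by (rule Inf_greatest) blast

lemma sepcon_mono: "f \<le> f' \<Longrightarrow> g \<le> g' \<Longrightarrow> f \<oplus>\<^sub>s g \<le> f' \<oplus>\<^sub>s g'"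
proof -
  assume a: "f \<le> f'" "g \<le> g'"
  have "(f \<oplus>\<^sub>s g) (s, h) \<le> (f' \<oplus>\<^sub>s g') (s, h)" for s h
  proof (rule sepcon_ge)
    fix h1 h2 assume "hdisj h1 h2" "h = hunion h1 h2"
    then have "(f \<oplus>\<^sub>s g) (s, h) \<le> f (s, h1) + g (s, h2)" using sepcon_le by blast
    also have "\<dots> \<le> f' (s, h1) + g' (s, h2)" using a by (auto intro!: add_mono simp: le_fun_def)
    finally show "(f \<oplus>\<^sub>s g) (s, h) \<le> f' (s, h1) + g' (s, h2)" .
  qed
  then show ?thesis by (simp add: le_fun_def split_paired_all)
qed

lemma sepcon_assoc_le: "A \<oplus>\<^sub>s (f \<oplus>\<^sub>s g) \<le> (A \<oplus>\<^sub>s f) \<oplus>\<^sub>s g"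
proof -
  have "(A \<oplus>\<^sub>s (f \<oplus>\<^sub>s g)) (s, h) \<le> ((A \<oplus>\<^sub>s f) \<oplus>\<^sub>s g) (s, h)" for s h
  proof (rule sepcon_ge)
    fix h12 h3 assume d: "hdisj h12 h3" "h = hunion h12 h3"
    show "(A \<oplus>\<^sub>s (f \<oplus>\<^sub>s g)) (s, h) \<le> (A \<oplus>\<^sub>s f) (s, h12) + g (s, h3)"
      unfolding sepcon_apply[of A f s h12]
    proof (rule Inf_add_ge)
      fix x assume "x \<in> {A (s, h1) + f (s, h2) |h1 h2. hdisj h1 h2 \<and> h12 = hunion h1 h2}"
      then obtain h1 h2 where x: "x = A (s, h1) + f (s, h2)" "hdisj h1 h2" "h12 = hunion h1 h2" by blast
      note sa = split_assoc[OF d(1) x(3) x(2)]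
      have "(A \<oplus>\<^sub>s (f \<oplus>\<^sub>s g)) (s, h) \<le> A (s, h1) + (f \<oplus>\<^sub>s g) (s, hunion h2 h3)"
        using sepcon_le[OF sa(2)] d sa by simp
      also have "\<dots> \<le> A (s, h1) + (f (s, h2) + g (s, h3))"
        using sepcon_le[OF sa(1)] by (rule add_left_mono)
      finally show "(A \<oplus>\<^sub>s (f \<oplus>\<^sub>s g)) (s, h) \<le> x + g (s, h3)" by (simp add: x add.assoc)
    qed
  qed
  then show ?thesis by (simp add: le_fun_def split_paired_all)
qed

lemma sepimp_frame: "sepimp B (F \<oplus>\<^sub>s g) \<le> sepimp B F \<oplus>\<^sub>s g"
proof -
  have "sepimp B (F \<oplus>\<^sub>s g) (s, h) \<le> (sepimp B F \<oplus>\<^sub>s g) (s, h)" for s h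
  proof (rule sepcon_ge)
    fix h1 h2 assume d: "hdisj h1 h2" "h = hunion h1 h2"
    show "sepimp B (F \<oplus>\<^sub>s g) (s, h) \<le> sepimp B F (s, h1) + g (s, h2)"
      unfolding sepimp_def case_prod_conv
    proof (rule Sup_least)
      fix y assume "y \<in> {tsub ((F \<oplus>\<^sub>s g) (s, hunion h h')) (B (s, h')) |h'. hdisj h' h}"
      then obtain h' where y: "y = tsub ((F \<oplus>\<^sub>s g) (s, hunion h h')) (B (s, h'))" "hdisj h' h" by blast
      note se = split_ext[OF y(2)[unfolded d(2)] d(1)]
      have "y \<le> tsub (F (s, hunion h1 h') + g (s, h2)) (B (s, h'))"
        unfolding y(1) d(2) se(3) by (rule tsub_mono, rule sepcon_le[OF se(2)])
      also have "\<dots> \<le> tsub (F (s, hunion h1 h')) (B (s, h')) + g (s, h2)" by (rule tsub_add)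
      also have "\<dots> \<le> Sup {tsub (F (s, hunion h1 h')) (B (s, h')) |h'. hdisj h' h1} + g (s, h2)"
        using se(1) by (intro add_right_mono Sup_upper) blast
      finally show "y \<le> Sup {tsub (F (s, hunion h1 h')) (B (s, h')) |h'. hdisj h' h1} + g (s, h2)" .
    qed
  qed
  then show ?thesis by (simp add: le_fun_def split_paired_all)
qed

lemma subst_sepcon: "not_in_vars x g \<Longrightarrow> subst (f \<oplus>\<^sub>s g) x e = subst f x e \<oplus>\<^sub>s g"
  by (auto simp: fun_eq_iff subst_def sepcon_def not_in_vars_def)

lemma SUP_sepcon: "(\<lambda>\<sigma>. SUP v::nat. (A v \<oplus>\<^sub>s g) \<sigma>) \<le> (\<lambda>\<sigma>. SUP v. A v \<sigma>) \<oplus>\<^sub>s g"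
proof (rule le_funI, rule SUP_least)
  fix \<sigma> v
  have "A v \<oplus>\<^sub>s g \<le> (\<lambda>\<sigma>. SUP v. A v \<sigma>) \<oplus>\<^sub>s g"
    by (rule sepcon_mono) (auto intro: SUP_upper simp: le_fun_def)
  then show "(A v \<oplus>\<^sub>s g) \<sigma> \<le> ((\<lambda>\<sigma>. SUP v. A v \<sigma>) \<oplus>\<^sub>s g) \<sigma>" by (rule le_funD)
qed

lemma INF_sepcon: "(\<lambda>\<sigma>. INF v::nat. (A v \<oplus>\<^sub>s g) \<sigma>) \<le> (\<lambda>\<sigma>. INF v. A v \<sigma>) \<oplus>\<^sub>s g"
proof -
  have "(INF v::nat. (A v \<oplus>\<^sub>s g) (s, h)) \<le> ((\<lambda>\<sigma>. INF v. A v \<sigma>) \<oplus>\<^sub>s g) (s, h)" for s h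
  proof (rule sepcon_ge)
    fix h1 h2 assume d: "hdisj h1 h2" "h = hunion h1 h2"
    show "(INF v. (A v \<oplus>\<^sub>s g) (s, h)) \<le> (INF v. A v (s, h1)) + g (s, h2)"
    proof (rule Inf_add_ge)
      fix x assume "x \<in> range (\<lambda>v. A v (s, h1))"
      then obtain v where "x = A v (s, h1)" by blast
      then show "(INF v. (A v \<oplus>\<^sub>s g) (s, h)) \<le> x + g (s, h2)"
        using sepcon_le[OF d(1), of "A v" g s] d(2) by (auto intro: INF_lower2)
    qed
  qed
  then show ?thesis by (simp add: le_fun_def split_paired_all)
qed

lemma comb_sepcon:
  fixes a b :: "'v stack \<Rightarrow> ennreal"
  assumes ab: "\<And>s. a s + b s = 1"
  shows "(\<lambda>\<sigma>. a (fst \<sigma>) * (A \<oplus>\<^sub>s g) \<sigma> + b (fst \<sigma>) * (B \<oplus>\<^sub>s g) \<sigma>)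
     \<le> (\<lambda>\<sigma>. a (fst \<sigma>) * A \<sigma> + b (fst \<sigma>) * B \<sigma>) \<oplus>\<^sub>s g"
proof -
  have "a s * (A \<oplus>\<^sub>s g) (s, h) + b s * (B \<oplus>\<^sub>s g) (s, h)
     \<le> ((\<lambda>\<sigma>. a (fst \<sigma>) * A \<sigma> + b (fst \<sigma>) * B \<sigma>) \<oplus>\<^sub>s g) (s, h)" for s h
  proof (rule sepcon_ge)
    fix h1 h2 assume d: "hdisj h1 h2" "h = hunion h1 h2"
    have "a s * (A \<oplus>\<^sub>s g) (s, h) + b s * (B \<oplus>\<^sub>s g) (s, h)
        \<le> a s * (A (s, h1) + g (s, h2)) + b s * (B (s, h1) + g (s, h2))"
      using d sepcon_le[OF d(1), of A g s] sepcon_le[OF d(1), of B g s]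
      by (auto intro!: add_mono mult_left_mono)
    also have "\<dots> = a s * A (s, h1) + b s * B (s, h1) + (a s + b s) * g (s, h2)"
      by (simp add: algebra_simps)
    also have "\<dots> = a s * A (s, h1) + b s * B (s, h1) + g (s, h2)" using ab by simp
    finally show "a s * (A \<oplus>\<^sub>s g) (s, h) + b s * (B \<oplus>\<^sub>s g) (s, h)
        \<le> (\<lambda>\<sigma>. a (fst \<sigma>) * A \<sigma> + b (fst \<sigma>) * B \<sigma>) (s, h1) + g (s, h2)" by simp
  qed
  then show ?thesis by (simp add: le_fun_def split_paired_all)
qed

lemma sepimp_mono: "F \<le> F' \<Longrightarrow> sepimp B F \<le> sepimp B F'"
  unfolding sepimp_def le_fun_def
  by clarsimp (fastforce intro!: Sup_mono tsub_mono)

lemma subst_mono: "F \<le> F' \<Longrightarrow> subst F x e \<le> subst F' x e"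
  unfolding subst_def le_fun_def by auto

lemma iv_mono: "F \<le> F' \<Longrightarrow> iv b F \<le> iv b F'"
  unfolding iv_def le_fun_def by (auto intro: mult_left_mono)

lemma ert_mono: "f \<le> f' \<Longrightarrow> ert C f \<le> ert C f'"
proof (induction C arbitrary: f f')
  case (Tick e) then show ?case by (simp add: sepcon_mono)
next
  case (Assign x e) then show ?case by (simp add: subst_mono)
next
  case (Alloc x e) then show ?case
    by (auto simp: le_fun_def intro!: SUP_subset_mono[OF order_refl] sepimp_mono[THEN le_funD] subst_mono)
next
  case (Store e e') then show ?case by (simp add: sepcon_mono sepimp_mono)
next
  case (Load x e) then show ?case
    by (auto simp: le_fun_def intro!: INF_mono sepcon_mono[THEN le_funD] sepimp_mono subst_mono)
next
  case (Free e) then show ?case by (simp add: sepcon_mono)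
next
  case (PChoice C1 p C2) then show ?case
    by (fastforce simp: le_fun_def intro!: add_mono mult_left_mono)
next
  case (If b C1 C2) then show ?case
    by (fastforce simp: le_fun_def intro!: add_mono iv_mono[THEN le_funD])
next
  case (Seq C1 C2) then show ?case by simp
next
  case (While b C)
  show ?case
    by (simp, rule lfp_mono, rule le_funI, rule add_mono, rule iv_mono[THEN le_funD])
      (use While.prems in auto)
qed

lemma frame:
  "wf_prog C \<Longrightarrow> \<forall>x \<in> modv C. not_in_vars x g \<Longrightarrow> ert C (f \<oplus>\<^sub>s g) \<le> ert C f \<oplus>\<^sub>s g"
proof (induction C arbitrary: f)
  case (Tick e) then show ?case by (simp add: sepcon_assoc_le)
next
  case (Assign x e) then show ?case by (simp add: subst_sepcon)
next
  case (Alloc x e)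
  let ?B = "\<lambda>v::nat. bigsep (\<lambda>i. pto (\<lambda>_. v + i - 1) (\<lambda>_. 0)) e"
  have "ert (Alloc x e) (f \<oplus>\<^sub>s g) = (\<lambda>\<sigma>. SUP v. sepimp (?B v) (subst f x (\<lambda>_. v) \<oplus>\<^sub>s g) \<sigma>)"
    using Alloc by (simp add: subst_sepcon)
  also have "\<dots> \<le> (\<lambda>\<sigma>. SUP v. (sepimp (?B v) (subst f x (\<lambda>_. v)) \<oplus>\<^sub>s g) \<sigma>)"
    by (rule le_funI, rule SUP_subset_mono[OF order_refl], rule le_funD[OF sepimp_frame])
  also have "\<dots> \<le> ert (Alloc x e) f \<oplus>\<^sub>s g"
    by (simp only: ert.simps) (rule SUP_sepcon)
  finally show ?case .
next
  case (Store e e')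
  have "ert (Store e e') (f \<oplus>\<^sub>s g) \<le> pto_any e \<oplus>\<^sub>s (sepimp (pto e e') f \<oplus>\<^sub>s g)"
    by (simp, rule sepcon_mono, simp, rule sepimp_frame)
  also have "\<dots> \<le> ert (Store e e') f \<oplus>\<^sub>s g" by (simp add: sepcon_assoc_le)
  finally show ?case .
next
  case (Load x e)
  let ?P = "\<lambda>v::nat. pto e (\<lambda>_. v)"
  have "ert (Load x e) (f \<oplus>\<^sub>s g) = (\<lambda>\<sigma>. INF v. (?P v \<oplus>\<^sub>s sepimp (?P v) (subst f x (\<lambda>_. v) \<oplus>\<^sub>s g)) \<sigma>)"
    using Load by (simp add: subst_sepcon)
  also have "\<dots> \<le> (\<lambda>\<sigma>. INF v. ((?P v \<oplus>\<^sub>s sepimp (?P v) (subst f x (\<lambda>_. v))) \<oplus>\<^sub>s g) \<sigma>)"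
  proof -
    have "?P v \<oplus>\<^sub>s sepimp (?P v) (subst f x (\<lambda>_. v) \<oplus>\<^sub>s g)
        \<le> (?P v \<oplus>\<^sub>s sepimp (?P v) (subst f x (\<lambda>_. v))) \<oplus>\<^sub>s g"
      for v by (rule order_trans[OF sepcon_mono[OF order_refl sepimp_frame] sepcon_assoc_le])
    then show ?thesis by (intro le_funI INF_mono') (rule le_funD)
  qed
  also have "\<dots> \<le> ert (Load x e) f \<oplus>\<^sub>s g"
    by (simp only: ert.simps) (rule INF_sepcon)
  finally show ?case .
next
  case (Free e) then show ?case by (simp add: sepcon_assoc_le)
next
  case (PChoice C1 p C2)
  define a where "a = (\<lambda>s. ennreal (real_of_rat (p s)))"
  define b where "b = (\<lambda>s. ennreal (1 - real_of_rat (p s)))"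
  have ab: "a s + b s = 1" for s
  proof -
    have "0 \<le> p s" "p s \<le> 1" using PChoice.prems by auto
    then have "0 \<le> real_of_rat (p s)" "real_of_rat (p s) \<le> 1"
      by (metis of_rat_0 of_rat_less_eq, metis of_rat_1 of_rat_less_eq)
    then show ?thesis unfolding a_def b_def by (simp add: ennreal_plus[symmetric] del: ennreal_plus)
  qed
  have eq: "ert (PChoice C1 p C2) F = (\<lambda>\<sigma>. a (fst \<sigma>) * ert C1 F \<sigma> + b (fst \<sigma>) * ert C2 F \<sigma>)" for F
    by (auto simp: fun_eq_iff a_def b_def)
  have "ert (PChoice C1 p C2) (f \<oplus>\<^sub>s g)
      \<le> (\<lambda>\<sigma>. a (fst \<sigma>) * (ert C1 f \<oplus>\<^sub>s g) \<sigma> + b (fst \<sigma>) * (ert C2 f \<oplus>\<^sub>s g) \<sigma>)"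
    unfolding eq using PChoice.IH[of f] PChoice.prems
    by (auto simp: le_fun_def intro!: add_mono mult_left_mono)
  also have "\<dots> \<le> ert (PChoice C1 p C2) f \<oplus>\<^sub>s g"
    unfolding eq by (rule comb_sepcon[OF ab])
  finally show ?case .
next
  case (If c C1 C2)
  define a where "a = (\<lambda>s. if c s then 1 else (0::ennreal))"
  define b where "b = (\<lambda>s. if \<not> c s then 1 else (0::ennreal))"
  have ab: "a s + b s = 1" for s unfolding a_def b_def by auto
  have eq: "ert (If c C1 C2) F = (\<lambda>\<sigma>. a (fst \<sigma>) * ert C1 F \<sigma> + b (fst \<sigma>) * ert C2 F \<sigma>)" for F
    by (auto simp: fun_eq_iff a_def b_def iv_def)
  have "ert (If c C1 C2) (f \<oplus>\<^sub>s g)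
      \<le> (\<lambda>\<sigma>. a (fst \<sigma>) * (ert C1 f \<oplus>\<^sub>s g) \<sigma> + b (fst \<sigma>) * (ert C2 f \<oplus>\<^sub>s g) \<sigma>)"
    unfolding eq using If.IH[of f] If.prems
    by (auto simp: le_fun_def intro!: add_mono mult_left_mono)
  also have "\<dots> \<le> ert (If c C1 C2) f \<oplus>\<^sub>s g"
    unfolding eq by (rule comb_sepcon[OF ab])
  finally show ?case .
next
  case (Seq C1 C2)
  have "ert C1 (ert C2 (f \<oplus>\<^sub>s g)) \<le> ert C1 (ert C2 f \<oplus>\<^sub>s g)"
    using Seq by (intro ert_mono) auto
  also have "\<dots> \<le> ert C1 (ert C2 f) \<oplus>\<^sub>s g" using Seq by auto
  finally show ?case by simp
next
  case (While c C)
  define \<Phi> where "\<Phi> = (\<lambda>F X \<sigma>. iv (\<lambda>s. \<not> c s) F \<sigma> + iv c (ert C X) \<sigma>)"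
  have mono: "mono (\<Phi> F)" for F
    unfolding \<Phi>_def
    by (rule monoI, rule le_funI, rule add_mono, simp, rule iv_mono[THEN le_funD], rule ert_mono)
  define X where "X = lfp (\<Phi> f)"
  have a: "a s + b s = 1" if "a = (\<lambda>s. if \<not> c s then 1 else (0::ennreal))"
     "b = (\<lambda>s. if c s then 1 else (0::ennreal))" for a b s using that by auto
  have ivf: "iv d F = (\<lambda>\<sigma>. (if d (fst \<sigma>) then 1 else 0) * F \<sigma>)" for d and F :: "'a runtime"
    by (auto simp: fun_eq_iff iv_def)
  have "\<Phi> (f \<oplus>\<^sub>s g) (X \<oplus>\<^sub>s g) \<le> X \<oplus>\<^sub>s g"
  proof -
    have "\<Phi> (f \<oplus>\<^sub>s g) (X \<oplus>\<^sub>s g) \<le> (\<lambda>\<sigma>. iv (\<lambda>s. \<not> c s) (f \<oplus>\<^sub>s g) \<sigma> + iv c (ert C X \<oplus>\<^sub>s g) \<sigma>)"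
      unfolding \<Phi>_def using While
      by (intro le_funI add_mono order_refl iv_mono[THEN le_funD]) (auto simp: le_fun_def)
    also have "\<dots> \<le> \<Phi> f X \<oplus>\<^sub>s g"
      unfolding \<Phi>_def ivf by (rule comb_sepcon[OF a]) auto
    also have "\<Phi> f X = X" unfolding X_def by (rule lfp_unfold[OF mono, symmetric])
    finally show ?thesis .
  qed
  then have "lfp (\<Phi> (f \<oplus>\<^sub>s g)) \<le> X \<oplus>\<^sub>s g" by (rule lfp_lowerbound)
  then show ?case unfolding X_def \<Phi>_def by simp
qed

theorem mainTheorem9:
  fixes C :: "('v::finite) prog" and f g :: "'v runtime"
  assumes "wf_prog C"
    and "\<forall>x \<in> modv C. not_in_vars x g"
  shows "ert C (f \<oplus>\<^sub>s g) \<le> ert C f \<oplus>\<^sub>s g"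
  using frame assms by blast

end
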